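(* In the time-dependent setting below, for $u^0\in l^{\infty,+}$ and $t_0\in\mathbb R$: if $u^0\le d\phi(t_0,\cdot)+d_1\phi_1(t_0,\cdot)$ (resp. $u^0\ge d\phi(t_0,\cdot)-d_1\phi_1(t_0,\cdot)$) with $0<d\le2$ and $d_1$ sufficiently large, then $u(t;t_0,u^0)\le d\phi(t,\cdot)+d_1\phi_1(t,\cdot)$ (resp. $u(t;t_0,u^0)\ge d\phi(t,\cdot)-d_1\phi_1(t,\cdot)$) for all $t\ge t_0$.
   Context: Time-dependent setting: the lattice equation $\dot u_j(t)=\big(u_{j+1}(t)-u_j(t)\big)+\big(u_{j-1}(t)-u_j(t)\big)+u_j(t)f(t,u_j(t))$, $j\in\mathbb Z$ (spatially homogeneous, unit diffusion, which is the normalization behind the formulas below), where $f$ satisfies (H0): locally Hölder in $t$, Lipschitz in $u$, $C^1$ in $u$ for $u\ge0$, $f(t,u)=f(t,0)$ for $u\le0$, $f(t,u)<0$ for $u\ge M_0$, $f_u<0$ for $u\ge0$, $\liminf_{t-s\to\infty}\frac1{t-s}\int_s^tf(\tau,0)d\tau>0$. $u(t;s,u^0)$ is the solution with $u(s;s,u^0)=u^0$; $l^{\infty,+}$ is the set of bounded nonnegative sequences; inequalities componentwise. Let $\bar f_{\inf}=\liminf_{t-s\to\infty}\frac1{t-s}\int_s^tf(\tau,0)d\tau$ and $\tilde c_0^-=\inf_{\mu>0}\frac{e^{-\mu}+e^\mu-2+\bar f_{\inf}}{\mu}$, attained at a unique $\mu^*>0$. Fix $\gamma>\tilde c_0^-$,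 let $0<\mu<\mu^*$ solve $\frac{e^{-\mu}+e^\mu-2+\bar f_{\inf}}{\mu}=\gamma$, and $c(t)=\frac{e^{-\mu}+e^\mu-2+f(t,0)}{\mu}$. Let $\phi(t,j)=e^{-\mu(j-\int_0^tc(\tau)d\tau)}$. Choose $\tilde\mu\in(\mu,2\mu)$ such that $B(t)=-(e^{-\tilde\mu}+e^{\tilde\mu}-2)+c(t)\tilde\mu-f(t,0)$ has $\liminf_{t-s\to\infty}\frac1{t-s}\int_s^tB>0$, and $A\in W^{1,\infty}(\mathbb R)$ with $\operatorname{ess\,inf}_{t}(A'(t)+B(t))>0$. Let $\phi_1(t,j)=e^{A(t)-\tilde\mu(j-\int_0^tc(\tau)d\tau)}$. *)

theory Defs
  imports "HOL-Analysis.Analysis"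
begin

definition oint :: "real \<Rightarrow> real \<Rightarrow> (real \<Rightarrow> real) \<Rightarrow> real" where
  "oint a b g = (if a \<le> b then integral {a..b} g else - integral {b..a} g)"

text \<open>liminf_{t-s \<rightarrow> \<infinity>} (1/(t-s)) int_s^t g, as an extended real.\<close>
definition mean_liminf :: "(real \<Rightarrow> real) \<Rightarrow> ereal" where
  "mean_liminf g = (SUP T::real. INF p \<in> {(s,t). t - s \<ge> T}.
      ereal (integral {fst p..snd p} g / (snd p - fst p)))"

definition H0 :: "(real \<Rightarrow> real \<Rightarrow> real) \<Rightarrow> (real \<Rightarrow> real \<Rightarrow> real) \<Rightarrow> real \<Rightarrow> bool" where
  "H0 f fu M0 \<longleftrightarrow>
     (\<forall>a b R. \<exists>C \<alpha>. C \<ge> 0 \<and> 0 < \<alpha> \<and> \<alpha> \<le> 1 \<and>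
        (\<forall>s\<in>{a..b}. \<forall>t\<in>{a..b}. \<forall>u. \<bar>u\<bar> \<le> R \<longrightarrow> \<bar>f t u - f s u\<bar> \<le> C * \<bar>t - s\<bar> powr \<alpha>)) \<and>
     (\<forall>R. \<exists>L. \<forall>t u v. \<bar>u\<bar> \<le> R \<longrightarrow> \<bar>v\<bar> \<le> R \<longrightarrow> \<bar>f t u - f t v\<bar> \<le> L * \<bar>u - v\<bar>) \<and>
     (\<forall>t u. 0 \<le> u \<longrightarrow> (f t has_real_derivative fu t u) (at u within {0..})) \<and>
     (\<forall>t. continuous_on {0..} (fu t)) \<and>
     (\<forall>t u. u \<le> 0 \<longrightarrow> f t u = f t 0) \<and>
     (\<forall>t u. M0 \<le> u \<longrightarrow> f t u < 0) \<and>
     (\<forall>t u. 0 \<le> u \<longrightarrow> fu t u < 0) \<and>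
     mean_liminf (\<lambda>\<tau>. f \<tau> 0) > 0"

definition lattice_solution :: "(real \<Rightarrow> real \<Rightarrow> real) \<Rightarrow> real \<Rightarrow> (int \<Rightarrow> real) \<Rightarrow> (real \<Rightarrow> int \<Rightarrow> real) \<Rightarrow> bool" where
  "lattice_solution f t0 u0 u \<longleftrightarrow>
     u t0 = u0 \<and>
     (\<forall>T. \<exists>K. \<forall>t\<in>{t0..T}. \<forall>j. \<bar>u t j\<bar> \<le> K) \<and>
     (\<forall>t\<ge>t0. \<forall>j. ((\<lambda>s. u s j) has_real_derivative
         (u t (j+1) - u t j) + (u t (j-1) - u t j) + u t j * f t (u t j)) (at t within {t0..}))"

definition linf_plus :: "(int \<Rightarrow> real) \<Rightarrow> bool" where
  "linf_plus u0 \<longleftrightarrow> (\<forall>j. 0 \<le> u0 j) \<and> (\<exists>K. \<forall>j. u0 j \<le> K)"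

end

theory Submission
  imports Defs
begin

definition eta :: "int \<Rightarrow> real" where "eta j = exp (real_of_int j) + exp (- real_of_int j)"

lemma eta_shift: "eta (j+1) + eta (j-1) = (exp 1 + exp (-1)) * eta j"
  unfolding eta_def by (simp add: exp_add[symmetric] exp_diff algebra_simps exp_minus field_simps)

lemma eta_ge: "eta j \<ge> 1 + \<bar>real_of_int j\<bar>"
proof -
  have "exp (\<bar>real_of_int j\<bar>) \<ge> 1 + \<bar>real_of_int j\<bar>" by (rule exp_ge_add_one_self)
  moreover have "exp (\<bar>real_of_int j\<bar>) \<le> eta j" unfolding eta_def
    by (cases "j \<ge> 0") auto
  ultimately show ?thesis by linarith
qed

lemma eta_pos: "eta j > 0" unfolding eta_def by (simp add: add_pos_pos)

lemma e_small: "exp 1 + exp (-1::real) < 4"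
proof -
  have "exp (-1::real) < 1" by simp
  thus ?thesis using exp_le by linarith
qed


lemma cmp_core:
  fixes z z' :: "real \<Rightarrow> int \<Rightarrow> real"
  assumes sT: "s \<le> T" and K: "K \<ge> 0" and eps: "\<epsilon> > 0"
  and init: "\<forall>j. z s j \<le> 0"
  and bdd: "\<forall>t\<in>{s..T}. \<forall>j. z t j \<le> M"
  and der: "\<forall>t\<in>{s..T}. \<forall>j. ((\<lambda>\<tau>. z \<tau> j) has_real_derivative z' t j) (at t within {s..})"
  and ineq: "\<forall>t\<in>{s..T}. \<forall>j. z t j > 0 \<longrightarrow> z' t j \<le> z t (j+1) + z t (j-1) - 2 * z t j + K * z t j"
  shows "\<forall>t\<in>{s..T}. \<forall>j. z t j < \<epsilon> * exp ((K+2) * (t - s)) * eta j"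
proof (rule ccontr)
  define \<Lambda> where "\<Lambda> = K + 2"
  define g where "g j t = z t j - \<epsilon> * exp (\<Lambda> * (t - s)) * eta j" for j t
  define g' where "g' j t = z' t j - \<epsilon> * \<Lambda> * exp (\<Lambda> * (t - s)) * eta j" for j t
  have gder: "(g j has_real_derivative g' j t) (at t within {s..})" if "t \<in> {s..T}" for j t
    unfolding g_def g'_def using der that
    by (auto intro!: derivative_eq_intros)
  have gcont: "continuous_on {s..T} (g j)" for j
  proof -
    have "continuous (at t within {s..T}) (g j)" if "t \<in> {s..T}" for t
      using DERIV_continuous[OF gder[OF that, of j]] continuous_within_subset by fastforce
    thus ?thesis using continuous_on_eq_continuous_within by blast
  qed
  define N where "N = ceiling (\<bar>M\<bar> / \<epsilon>)"
  have small: "g j t < 0" if "t \<in> {s..T}" "\<bar>j\<bar> > N" for j t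
  proof -
    have "\<bar>M\<bar> / \<epsilon> \<le> of_int N" unfolding N_def by (rule le_of_int_ceiling)
    also have "\<dots> < of_int \<bar>j\<bar>" using that(2) by linarith
    finally have "\<bar>M\<bar> / \<epsilon> < \<bar>real_of_int j\<bar>" by simp
    hence "\<bar>M\<bar> < \<epsilon> * \<bar>real_of_int j\<bar>" using eps by (simp add: field_simps)
    also have "\<dots> \<le> \<epsilon> * eta j" using eta_ge[of j] eps by simp
    also have "\<dots> \<le> \<epsilon> * exp (\<Lambda> * (t - s)) * eta j"
    proof -
      have "1 \<le> exp (\<Lambda> * (t - s))" using that K unfolding \<Lambda>_def by simp
      thus ?thesis using eps eta_pos[of j] by simp
    qed
    finally have "\<bar>M\<bar> < \<epsilon> * exp (\<Lambda> * (t - s)) * eta j" .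
    moreover have "z t j \<le> M" using bdd that by blast
    ultimately show ?thesis unfolding g_def by linarith
  qed
  define V where "V = {t \<in> {s..T}. \<exists>j. g j t \<ge> 0}"
  assume "\<not> ?thesis"
  then obtain t1 j1 where t1: "t1 \<in> {s..T}" "g j1 t1 \<ge> 0" unfolding g_def \<Lambda>_def by (auto simp: not_less)
  have V_eq: "V = (\<Union>j\<in>{-N..N}. {t \<in> {s..T}. 0 \<le> g j t})"
    unfolding V_def
  proof (intro set_eqI iffI)
    fix t assume "t \<in> {t \<in> {s..T}. \<exists>j. 0 \<le> g j t}"
    then obtain j where "t \<in> {s..T}" "0 \<le> g j t" by auto
    moreover have "\<bar>j\<bar> \<le> N" using small[of t j] calculation by force
    moreover have "j \<in> {-N..N}" using calculation(3) by (simp add: abs_le_iff)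
    ultimately show "t \<in> (\<Union>j\<in>{-N..N}. {t \<in> {s..T}. 0 \<le> g j t})" by blast
  qed auto
  have closedV: "closed V" unfolding V_eq
    by (intro closed_UN finite_atLeastAtMost_int ballI continuous_on_closed_Collect_le gcont)
       (auto intro: continuous_on_const)
  have "V \<noteq> {}" using t1 unfolding V_def by blast
  moreover have "bdd_below V" unfolding V_def by (auto intro: bdd_belowI[of _ s])
  ultimately have tsV: "Inf V \<in> V" using closedV closed_contains_Inf by blast
  define ts where "ts = Inf V"
  have before: "g j t < 0" if "t \<in> {s..<ts}" for j t
  proof -
    have "t \<notin> V" using that \<open>bdd_below V\<close> cInf_lower[of _ V] unfolding ts_def by force
    moreover have "t \<in> {s..T}" using that tsV unfolding V_def ts_def by auto
    ultimately show ?thesis unfolding V_def by (auto simp: not_le)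
  qed
  have init': "g j s < 0" for j
  proof -
    have "0 < \<epsilon> * eta j" using eps eta_pos[of j] by simp
    moreover have "z s j \<le> 0" using init by blast
    ultimately show ?thesis unfolding g_def by simp
  qed
  have tsT: "ts \<in> {s..T}" using tsV unfolding V_def ts_def by auto
  have ts_gt: "ts > s"
  proof -
    have "ts \<noteq> s"
    proof
      assume "ts = s"
      then obtain j where "0 \<le> g j s" using tsV unfolding ts_def V_def by auto
      thus False using init'[of j] by simp
    qed
    thus ?thesis using tsT by auto
  qed
  have atts: "g j ts \<le> 0" for j
  proof (rule ccontr)
    assume "\<not> g j ts \<le> 0"
    then obtain x where "s \<le> x" "x \<le> ts" "g j x = 0"
      using IVT'[of "g j" s 0 ts] init'[of j] ts_gt continuous_on_subset[OF gcont, of "{s..ts}"] tsT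
      by fastforce
    thus False using before[of x j] \<open>\<not> g j ts \<le> 0\<close> by (cases "x = ts") auto
  qed
  obtain js where js: "g js ts \<ge> 0" using tsV unfolding ts_def V_def by auto
  hence g0: "g js ts = 0" using atts[of js] by simp
  have dat: "(g js has_real_derivative g' js ts) (at ts)"
  proof -
    have "at ts within {s..} = at ts" using ts_gt by (intro at_within_interior) auto
    thus ?thesis using gder[OF tsT, of js] by simp
  qed
  have "g' js ts \<ge> 0"
  proof (rule ccontr)
    assume "\<not> g' js ts \<ge> 0"
    then obtain d where d: "d > 0" "\<forall>h>0. h < d \<longrightarrow> g js ts < g js (ts - h)"
      using DERIV_neg_dec_left[OF dat] by force
    define h where "h = min (d/2) (ts - s)"
    have "h > 0" "h < d" using d ts_gt unfolding h_def by auto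
    hence "g js (ts - h) > 0" using d g0 by auto
    moreover have "ts - h \<in> {s..<ts}" using \<open>h > 0\<close> unfolding h_def by auto
    ultimately show False using before[of "ts - h" js] by simp
  qed
  moreover have "g' js ts < 0"
  proof -
    define E where "E = exp (\<Lambda> * (ts - s))"
    have Epos: "E > 0" unfolding E_def by simp
    have zs: "z ts js = \<epsilon> * E * eta js" using g0 unfolding g_def E_def by simp
    have zpos: "z ts js > 0" using zs eps Epos eta_pos[of js] by simp
    have zp: "z ts (js+1) \<le> \<epsilon> * E * eta (js+1)" "z ts (js-1) \<le> \<epsilon> * E * eta (js-1)"
      using atts[of "js+1"] atts[of "js-1"] unfolding g_def E_def by auto
    have "z' ts js \<le> z ts (js+1) + z ts (js-1) - 2 * z ts js + K * z ts js"
      using ineq tsT zpos by blast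
    also have "\<dots> \<le> \<epsilon> * E * (eta (js+1) + eta (js-1)) - 2 * (\<epsilon> * E * eta js) + K * (\<epsilon> * E * eta js)"
      using zp zs by (simp add: algebra_simps)
    also have "\<dots> = \<epsilon> * E * eta js * (exp 1 + exp (-1) - 2 + K)"
      using eta_shift[of js] by (simp add: algebra_simps)
    finally have "g' js ts \<le> \<epsilon> * E * eta js * (exp 1 + exp (-1) - 2 + K) - \<epsilon> * \<Lambda> * E * eta js"
      unfolding g'_def E_def by simp
    also have "\<dots> = \<epsilon> * E * eta js * (exp 1 + exp (-1) - 4)" unfolding \<Lambda>_def by (simp add: algebra_simps)
    also have "\<dots> < 0" using e_small eps Epos eta_pos[of js] by (simp add: mult_pos_neg)
    finally show ?thesis .
  qed
  ultimately show False by simp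
qed


lemma cmp:
  fixes z z' :: "real \<Rightarrow> int \<Rightarrow> real"
  assumes sT: "s \<le> T" and K: "K \<ge> 0"
  and init: "\<forall>j. z s j \<le> 0"
  and bdd: "\<forall>t\<in>{s..T}. \<forall>j. z t j \<le> M"
  and der: "\<forall>t\<in>{s..T}. \<forall>j. ((\<lambda>\<tau>. z \<tau> j) has_real_derivative z' t j) (at t within {s..})"
  and ineq: "\<forall>t\<in>{s..T}. \<forall>j. z t j > 0 \<longrightarrow> z' t j \<le> z t (j+1) + z t (j-1) - 2 * z t j + K * z t j"
  shows "\<forall>t\<in>{s..T}. \<forall>j. z t j \<le> 0"
proof (intro ballI allI, rule ccontr)
  fix t j assume t: "t \<in> {s..T}" and nz: "\<not> z t j \<le> 0"
  define E where "E = exp ((K+2) * (t - s))"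
  have Ep: "E > 0" unfolding E_def by simp
  define \<epsilon> where "\<epsilon> = z t j / (2 * E * eta j)"
  have ep: "\<epsilon> > 0" unfolding \<epsilon>_def using nz Ep eta_pos[of j] by simp
  have "z t j < \<epsilon> * E * eta j" using cmp_core[OF sT K ep init bdd der ineq] t unfolding E_def by blast
  also have "\<epsilon> * E * eta j = z t j / 2" unfolding \<epsilon>_def using Ep eta_pos[of j] by simp
  finally show False using nz by simp
qed

lemma mono_ae:
  fixes g :: "real \<Rightarrow> real"
  assumes ab: "a \<le> b" and lip: "L-lipschitz_on {a..b} g"
  and ae: "AE t in lborel. \<exists>D. (g has_real_derivative D) (at t) \<and> D \<ge> 0"
  shows "g a \<le> g b"
proof (rule ccontr)
  assume neg: "\<not> g a \<le> g b"
  hence "a < b" using ab by (cases "a = b") auto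
  define \<epsilon> where "\<epsilon> = (g a - g b) / (2*(b - a))"
  have ep: "\<epsilon> > 0" using neg \<open>a < b\<close> unfolding \<epsilon>_def by simp
  define h where "h t = g t + \<epsilon> * t" for t
  have hab: "h b < h a"
  proof -
    have "\<epsilon> * (b - a) = (g a - g b) / 2" unfolding \<epsilon>_def using \<open>a < b\<close> by (simp add: field_simps)
    thus ?thesis unfolding h_def using neg by (simp add: algebra_simps)
  qed
  have hlip: "(L + \<epsilon>)-lipschitz_on {a..b} h"
  proof -
    have "\<epsilon>-lipschitz_on {a..b} (\<lambda>t. \<epsilon> * t)"
    proof (rule lipschitz_onI)
      fix x y :: real
      show "dist (\<epsilon> * x) (\<epsilon> * y) \<le> \<epsilon> * dist x y"
        using ep by (simp add: dist_real_def right_diff_distrib[symmetric] abs_mult)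
    qed (use ep in simp)
    thus ?thesis unfolding h_def by (intro lipschitz_on_add lip)
  qed
  have hcont: "continuous_on {a..b} h" using lipschitz_on_continuous_on[OF hlip] .
  obtain N where N: "{x \<in> space lborel. \<not> (\<exists>D. (g has_real_derivative D) (at x) \<and> D \<ge> 0)} \<subseteq> N"
     "emeasure lborel N = 0" "N \<in> sets lborel"
    using ae by (rule AE_E)
  have "N \<in> null_sets lborel" using N by auto
  hence negN: "negligible N" unfolding negligible_iff_null_sets by (rule null_sets_completionI)
  define S where "S = N \<inter> {a..b}"
  have negS: "negligible S" unfolding S_def using negN negligible_subset by blast
  have "negligible (h ` S)"
  proof (rule negligible_locally_Lipschitz_image)
    show "DIM(real) \<le> DIM(real)" by simp
    show "negligible S" by (rule negS)
    fix x assume x: "x \<in> S"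
    show "\<exists>T B. open T \<and> x \<in> T \<and> (\<forall>y\<in>S \<inter> T. norm (h y - h x) \<le> B * norm (y - x))"
    proof (intro exI conjI ballI)
      show "open (UNIV::real set)" by simp
      show "x \<in> UNIV" by simp
      fix y assume "y \<in> S \<inter> UNIV"
      thus "norm (h y - h x) \<le> (L + \<epsilon>) * norm (y - x)"
        using lipschitz_onD[OF hlip, of y x] x unfolding S_def by (auto simp: dist_real_def)
    qed
  qed
  moreover have "\<not> negligible (box (h b) (h a))" using hab negligible_interval(2)[of "h b" "h a"] by (simp add: box_real)
  ultimately have "\<not> box (h b) (h a) \<subseteq> h ` S" using negligible_subset by blast
  then obtain y where y: "h b < y" "y < h a" "y \<notin> h ` S" by (auto simp: box_real subset_iff)
  define V where "V = {t \<in> {a..b}. y \<le> h t}"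
  have closedV: "closed V" unfolding V_def
    by (intro continuous_on_closed_Collect_le hcont continuous_on_const) auto
  have "a \<in> V" using y ab unfolding V_def by auto
  hence "V \<noteq> {}" by auto
  moreover have "bdd_above V" unfolding V_def by (auto intro: bdd_aboveI[of _ b])
  ultimately have sV: "Sup V \<in> V" using closedV closed_contains_Sup by blast
  define s0 where "s0 = Sup V"
  have s0ab: "s0 \<in> {a..b}" and hs0: "y \<le> h s0" using sV unfolding s0_def V_def by auto
  have "s0 \<noteq> b" using hs0 y by auto
  hence s0b: "s0 < b" using s0ab by auto
  obtain x where x: "s0 \<le> x" "x \<le> b" "h x = y"
    using IVT2'[of h b y s0] y(1) hs0 s0b continuous_on_subset[OF hcont, of "{s0..b}"] s0ab by auto
  have "x \<in> V" using x s0ab unfolding V_def by auto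
  hence "x \<le> s0" unfolding s0_def using \<open>bdd_above V\<close> by (simp add: cSup_upper)
  hence hsy: "h s0 = y" using x by simp
  have "s0 \<notin> N" using y(3) hsy s0ab unfolding S_def by auto
  then obtain D where D: "(g has_real_derivative D) (at s0)" "D \<ge> 0" using N(1) by auto
  have "(h has_real_derivative D + \<epsilon>) (at s0)" unfolding h_def
    using D(1) by (auto intro!: derivative_eq_intros)
  moreover have "D + \<epsilon> > 0" using D ep by simp
  ultimately obtain d where d: "d > 0" "\<forall>k>0. k < d \<longrightarrow> h s0 < h (s0 + k)"
    using DERIV_pos_inc_right by blast
  define k where "k = min (d/2) (b - s0)"
  have k: "k > 0" "k < d" using d s0b unfolding k_def by auto
  have "h s0 < h (s0 + k)" using d k by blast
  moreover have "s0 + k \<in> {a..b}" using k s0ab unfolding k_def by auto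
  ultimately have "s0 + k \<in> V" using hsy unfolding V_def by auto
  hence "s0 + k \<le> s0" unfolding s0_def using \<open>bdd_above V\<close> by (rule cSup_upper)
  thus False using k by simp
qed


lemma oint_eq:
  fixes g :: "real \<Rightarrow> real"
  assumes g: "continuous_on UNIV g" and a: "a \<le> r" "a \<le> t"
  shows "oint r t g = integral {a..t} g - integral {a..r} g"
proof (cases "r \<le> t")
  case True
  have int: "g integrable_on {a..t}" by (rule integrable_continuous_interval, rule continuous_on_subset[OF g]) auto
  have "integral {a..r} g + integral {r..t} g = integral {a..t} g"
    using a True by (intro Henstock_Kurzweil_Integration.integral_combine[OF _ _ int]) auto
  thus ?thesis using True unfolding oint_def by simp
next
  case False
  have int: "g integrable_on {a..r}" by (rule integrable_continuous_interval, rule continuous_on_subset[OF g]) auto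
  have "integral {a..t} g + integral {t..r} g = integral {a..r} g"
    using a False by (intro Henstock_Kurzweil_Integration.integral_combine[OF _ _ int]) auto
  thus ?thesis using False unfolding oint_def by simp
qed

lemma oint_deriv:
  fixes g :: "real \<Rightarrow> real"
  assumes g: "continuous_on UNIV g"
  shows "((\<lambda>t. oint r t g) has_real_derivative g t) (at t)"
proof -
  define a where "a = min r t - 1"
  have "((\<lambda>u. integral {a..u} g) has_vector_derivative g t) (at t within {a..t+1})"
    by (rule integral_has_vector_derivative) (use continuous_on_subset[OF g] a_def in auto)
  moreover have "at t within {a..t+1} = at t" by (intro at_within_interior) (auto simp: a_def)
  ultimately have "((\<lambda>u. integral {a..u} g) has_real_derivative g t) (at t)"
    by (simp add: has_real_derivative_iff_has_vector_derivative)
  hence "((\<lambda>u. integral {a..u} g - integral {a..r} g) has_real_derivative g t) (at t)"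
    by (auto intro!: derivative_eq_intros)
  thus ?thesis
    by (rule has_field_derivative_transform_within_open[where S="{a<..}"])
       (use oint_eq[OF g, of a r] a_def in auto)
qed

lemma oint_same[simp]: "oint r r g = 0" unfolding oint_def by simp

lemma oint_lower:
  fixes g :: "real \<Rightarrow> real"
  assumes g: "continuous_on UNIV g" and rt: "r \<le> t" and lb: "\<forall>x\<in>{r..t}. g x \<ge> - M"
  shows "oint r t g \<ge> - M * (t - r)"
proof -
  have "integral {r..t} (\<lambda>x. - M) \<le> integral {r..t} g"
    by (intro integral_le integrable_continuous_interval continuous_on_subset[OF g] continuous_on_const)
       (use lb in auto)
  thus ?thesis using rt unfolding oint_def by (simp add: mult.commute)
qed


lemma cont_bound:
  fixes g :: "real \<Rightarrow> real"
  assumes "continuous_on {a..b} g"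
  shows "\<exists>K\<ge>0. \<forall>t\<in>{a..b}. \<bar>g t\<bar> \<le> K"
proof -
  have "compact (g ` {a..b})" by (intro compact_continuous_image assms) auto
  then obtain K where "\<forall>x\<in>g ` {a..b}. norm x \<le> K" using compact_imp_bounded bounded_iff by metis
  thus ?thesis by (intro exI[of _ "max K 0"]) auto
qed


lemma tz: "(0::real) < \<alpha> \<Longrightarrow> ((\<lambda>t. C * \<bar>t - x\<bar> powr \<alpha>) \<longlongrightarrow> 0) (at x)"
proof -
  assume a: "0 < \<alpha>"
  have "((\<lambda>t. t - x) \<longlongrightarrow> x - x) (at x)" by (intro tendsto_intros)
  hence "((\<lambda>t. \<bar>t - x\<bar>) \<longlongrightarrow> 0) (at x)" using tendsto_rabs by fastforce
  hence "((\<lambda>t. \<bar>t - x\<bar> powr \<alpha>) \<longlongrightarrow> 0) (at x)" 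
    by (rule tendsto_zero_powrI) (use a in auto)
  thus ?thesis using tendsto_mult_right_zero by blast
qed

lemma H0_cont0:
  assumes "H0 f fu M0"
  shows "continuous_on UNIV (\<lambda>t. f t 0)"
proof -
  have "isCont (\<lambda>t. f t 0) x" for x
  proof -
    have H: "\<forall>a b R. \<exists>C \<alpha>. C \<ge> 0 \<and> 0 < \<alpha> \<and> \<alpha> \<le> 1 \<and>
        (\<forall>s\<in>{a..b}. \<forall>t\<in>{a..b}. \<forall>u. \<bar>u\<bar> \<le> R \<longrightarrow> \<bar>f t u - f s u\<bar> \<le> C * \<bar>t - s\<bar> powr \<alpha>)"
      using assms unfolding H0_def by (rule conjunct1)
    obtain C \<alpha> where C: "0 < \<alpha>"
      "\<forall>s\<in>{x-1..x+1}. \<forall>t\<in>{x-1..x+1}. \<forall>u. \<bar>u\<bar> \<le> 0 \<longrightarrow> \<bar>f t u - f s u\<bar> \<le> C * \<bar>t - s\<bar> powr \<alpha>"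
      using spec[OF spec[OF spec[OF H, of "x-1"], of "x+1"], of 0] by blast
    have ev: "\<forall>\<^sub>F t in at x. t \<in> {x-1..x+1}"
      unfolding eventually_at by (rule exI[of _ 1]) (auto simp: dist_real_def)
    have "((\<lambda>t. f t 0 - f x 0) \<longlongrightarrow> 0) (at x)"
    proof (rule Lim_null_comparison)
      show "\<forall>\<^sub>F t in at x. norm (f t 0 - f x 0) \<le> C * \<bar>t - x\<bar> powr \<alpha>"
        using ev
      proof eventually_elim
        case (elim t)
        moreover have "x \<in> {x-1..x+1}" by simp
        ultimately have "\<bar>f t 0 - f x 0\<bar> \<le> C * \<bar>t - x\<bar> powr \<alpha>"
          using C(2)[rule_format, of x t 0] by simp
        thus ?case by simp
      qed
      show "((\<lambda>t. C * \<bar>t - x\<bar> powr \<alpha>) \<longlongrightarrow> 0) (at x)" using tz[OF C(1)] .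
    qed
    thus ?thesis unfolding isCont_def by (simp add: LIM_zero_iff)
  qed
  thus ?thesis by (simp add: continuous_on_eq_continuous_at)
qed


lemma H0_decr:
  assumes "H0 f fu M0" and u: "0 \<le> u"
  shows "f t u \<le> f t 0"
proof (cases "u = 0")
  case False
  hence up: "0 < u" using u by simp
  have der: "\<forall>x. 0 \<le> x \<longrightarrow> (f t has_real_derivative fu t x) (at x within {0..})"
    and neg: "\<forall>x. 0 \<le> x \<longrightarrow> fu t x < 0" using assms(1) unfolding H0_def by blast+
  have cont: "continuous_on {0..u} (f t)"
  proof -
    have "continuous (at x within {0..u}) (f t)" if "x \<in> {0..u}" for x
      using DERIV_continuous[OF der[rule_format, of x]] that continuous_within_subset[of x "{0..}" "f t" "{0..u}"]
      by auto
    thus ?thesis using continuous_on_eq_continuous_within by blast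
  qed
  have dd: "(f t has_real_derivative fu t x) (at x)" if "0 < x" "x < u" for x
  proof -
    have "at x within {0..} = at x" using that by (intro at_within_interior) auto
    thus ?thesis using der[rule_format, of x] that by simp
  qed
  obtain l z where lz: "0 < z" "z < u" "(f t has_real_derivative l) (at z)" "f t u - f t 0 = (u - 0) * l"
    using MVT[of 0 u "f t"] up cont dd real_differentiable_def by blast
  have "l = fu t z" using DERIV_unique[OF lz(3) dd[OF lz(1,2)]] .
  hence lneg: "l < 0" using neg lz by auto
  have ul: "u * l < 0" using mult_pos_neg[OF up lneg] .
  have "f t u - f t 0 = u * l" using lz(4) by simp
  thus ?thesis using ul by linarith
qed simp


lemma lip_from_deriv:
  fixes g g' :: "real \<Rightarrow> real"
  assumes der: "\<And>x. (g has_real_derivative g' x) (at x)" and bd: "\<forall>x\<in>{p..q}. \<bar>g' x\<bar> \<le> M" and M: "M \<ge> 0"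
  shows "M-lipschitz_on {p..q} g"
proof (rule lipschitz_onI)
  fix x y assume x: "x \<in> {p..q}" and y: "y \<in> {p..q}"
  have *: "\<bar>g b - g a\<bar> \<le> M * \<bar>b - a\<bar>" if ab: "a < b" and ain: "a \<in> {p..q}" and bin: "b \<in> {p..q}" for a b
  proof -
    obtain z where z: "a < z" "z < b" "g b - g a = (b - a) * g' z" using MVT2[of a b g g', OF ab der] by blast
    have "\<bar>g' z\<bar> \<le> M" using bd z ain bin by auto
    hence "\<bar>b - a\<bar> * \<bar>g' z\<bar> \<le> \<bar>b - a\<bar> * M" by (intro mult_left_mono) auto
    thus ?thesis using z by (simp add: abs_mult mult.commute)
  qed
  show "dist (g x) (g y) \<le> M * dist x y"
  proof (cases x y rule: linorder_cases)
    case less thus ?thesis using *[of x y] x y by (simp add: dist_real_def abs_minus_commute)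
  next
    case greater thus ?thesis using *[of y x] x y by (simp add: dist_real_def)
  qed simp
qed (rule M)

lemma key_est:
  fixes \<mu> \<mu>t d d1 x aa KA L \<delta> :: real
  assumes mu: "0 < \<mu>" "\<mu> < \<mu>t" "\<mu>t < 2*\<mu>" and d: "0 < d" "d \<le> 2" and del: "\<delta> > 0" and L: "L \<ge> 0"
    and aa: "aa \<ge> -KA-1" and d1: "d1 \<ge> 2*exp(KA+1)" "d1 \<ge> 4*L*exp(KA+1)/\<delta>"
    and w: "d * exp(-\<mu>*x) - d1 * exp(aa - \<mu>t*x) > 0"
  shows "x > 0" "d * exp(-\<mu>*x) - d1*exp(aa - \<mu>t*x) \<le> 2"
    "L * (d*exp(-\<mu>*x) - d1*exp(aa - \<mu>t*x))^2 \<le> d1 * \<delta> * exp(aa - \<mu>t*x)"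
proof -
  have ea: "exp aa * exp (KA+1) \<ge> 1"
  proof -
    have "exp aa * exp (KA+1) = exp (aa + (KA + 1))" by (simp add: exp_add)
    also have "\<dots> \<ge> 1" using aa by simp
    finally show ?thesis .
  qed
  have d1e: "d1 * exp aa \<ge> 2"
  proof -
    have "2 \<le> 2 * (exp aa * exp (KA+1))" using ea by simp
    also have "\<dots> = exp aa * (2 * exp(KA+1))" by simp
    also have "\<dots> \<le> exp aa * d1" using d1(1) by (intro mult_left_mono) auto
    finally show ?thesis by (simp add: mult.commute)
  qed
  have split: "exp (aa - \<mu>t*x) = exp aa * exp (-\<mu>t*x)" by (simp add: exp_add[symmetric])
  have "d1 * exp(aa - \<mu>t*x) \<ge> d * exp(-\<mu>t*x)"
  proof -
    have "d * exp(-\<mu>t*x) \<le> 2 * exp(-\<mu>t*x)" using d by simp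
    also have "\<dots> \<le> (d1 * exp aa) * exp(-\<mu>t*x)" using d1e by (intro mult_right_mono) auto
    finally show ?thesis using split by (simp add: mult.assoc)
  qed
  hence "d * exp(-\<mu>t*x) < d * exp(-\<mu>*x)" using w by linarith
  hence "exp(-\<mu>t*x) < exp(-\<mu>*x)" using d by simp
  hence "-\<mu>t*x < -\<mu>*x" by simp
  hence "(\<mu>t - \<mu>) * x > 0" by (simp add: algebra_simps)
  thus xp: "x > 0" using mu by (simp add: zero_less_mult_iff)
  have e1: "exp(-\<mu>*x) \<le> 1" using xp mu by simp
  have wle: "d * exp(-\<mu>*x) - d1*exp(aa - \<mu>t*x) \<le> d * exp(-\<mu>*x)"
  proof -
    have "d1 * exp(aa - \<mu>t*x) \<ge> 0" using d1 L del by (smt (verit) exp_gt_zero mult_nonneg_nonneg)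
    thus ?thesis by simp
  qed
  also have "\<dots> \<le> d" using e1 d by (simp add: mult_left_le)
  finally show "d * exp(-\<mu>*x) - d1*exp(aa - \<mu>t*x) \<le> 2" using d by simp
  have "(d*exp(-\<mu>*x) - d1*exp(aa - \<mu>t*x))^2 \<le> (d * exp(-\<mu>*x))^2"
    using w wle by (intro power_mono) auto
  also have "\<dots> = d^2 * exp(-2*\<mu>*x)" by (simp add: power2_eq_square exp_add[symmetric] algebra_simps)
  also have "\<dots> \<le> 4 * exp(-\<mu>t*x)"
  proof -
    have "d^2 \<le> 2^2" using d by (intro power_mono) auto
    moreover have "exp(-2*\<mu>*x) \<le> exp(-\<mu>t*x)" using mu xp by (simp add: mult_right_mono)
    ultimately show ?thesis by (intro mult_mono) auto
  qed
  finally have sq: "(d*exp(-\<mu>*x) - d1*exp(aa - \<mu>t*x))^2 \<le> 4 * exp(-\<mu>t*x)" .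
  have "4 * L \<le> d1 * \<delta> * exp aa"
  proof -
    have "4 * L \<le> 4 * L * (exp aa * exp (KA+1))" using ea L by (simp add: mult_le_cancel_left1)
    also have "\<dots> = exp aa * \<delta> * (4 * L * exp(KA+1) / \<delta>)" using del by simp
    also have "\<dots> \<le> exp aa * \<delta> * d1" using d1(2) del by (intro mult_left_mono) auto
    finally show ?thesis by (simp add: algebra_simps)
  qed
  have "L * (d*exp(-\<mu>*x) - d1*exp(aa - \<mu>t*x))^2 \<le> L * (4 * exp(-\<mu>t*x))"
    using sq L by (intro mult_left_mono)
  also have "\<dots> = (4 * L) * exp(-\<mu>t*x)" by simp
  also have "\<dots> \<le> (d1 * \<delta> * exp aa) * exp(-\<mu>t*x)" using \<open>4 * L \<le> _\<close> by (intro mult_right_mono) auto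
  also have "\<dots> = d1 * \<delta> * exp(aa - \<mu>t*x)" using split by simp
  finally show "L * (d*exp(-\<mu>*x) - d1*exp(aa - \<mu>t*x))^2 \<le> d1 * \<delta> * exp(aa - \<mu>t*x)" .
qed


theorem proposition4p1:
  fixes f fu :: "real \<Rightarrow> real \<Rightarrow> real" and M0 fbar \<mu>s \<gamma> \<mu> \<mu>t :: real
    and c B A :: "real \<Rightarrow> real" and \<phi> \<phi>1 :: "real \<Rightarrow> int \<Rightarrow> real"
  assumes hf: "H0 f fu M0"
    and fbar: "mean_liminf (\<lambda>\<tau>. f \<tau> 0) = ereal fbar"
    and mus_pos: "\<mu>s > 0"
    and mus_min: "\<forall>m>0. m \<noteq> \<mu>s \<longrightarrow>
        (exp (-\<mu>s) + exp \<mu>s - 2 + fbar) / \<mu>s < (exp (-m) + exp m - 2 + fbar) / m"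
    and gamma: "\<gamma> > (INF m\<in>{0<..}. (exp (-m) + exp m - 2 + fbar) / m)"
    and mu: "0 < \<mu>" "\<mu> < \<mu>s" "(exp (-\<mu>) + exp \<mu> - 2 + fbar) / \<mu> = \<gamma>"
    and c_def: "\<And>t. c t = (exp (-\<mu>) + exp \<mu> - 2 + f t 0) / \<mu>"
    and phi_def: "\<And>t j. \<phi> t j = exp (-\<mu> * (real_of_int j - oint 0 t c))"
    and mut: "\<mu> < \<mu>t" "\<mu>t < 2 * \<mu>"
    and B_def: "\<And>t. B t = -(exp (-\<mu>t) + exp \<mu>t - 2) + c t * \<mu>t - f t 0"
    and B_pos: "mean_liminf B > 0"
    and A_bdd: "\<exists>K. \<forall>t. \<bar>A t\<bar> \<le> K"
    and A_lip: "\<exists>L. L-lipschitz_on UNIV A"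
    and A_B: "\<exists>\<delta>>0. AE t in lborel. \<exists>D. (A has_real_derivative D) (at t) \<and> D + B t \<ge> \<delta>"
    and phi1_def: "\<And>t j. \<phi>1 t j = exp (A t - \<mu>t * (real_of_int j - oint 0 t c))"
  shows "\<exists>D1. \<forall>d1\<ge>D1. \<forall>d. 0 < d \<and> d \<le> 2 \<longrightarrow>
           (\<forall>t0 u0 u. linf_plus u0 \<and> lattice_solution f t0 u0 u \<longrightarrow>
              ((\<forall>j. u0 j \<le> d * \<phi> t0 j + d1 * \<phi>1 t0 j) \<longrightarrow>
                  (\<forall>t\<ge>t0. \<forall>j. u t j \<le> d * \<phi> t j + d1 * \<phi>1 t j)) \<and>
              ((\<forall>j. u0 j \<ge> d * \<phi> t0 j - d1 * \<phi>1 t0 j) \<longrightarrow>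
                  (\<forall>t\<ge>t0. \<forall>j. u t j \<ge> d * \<phi> t j - d1 * \<phi>1 t j)))"
proof -
  define f0 where "f0 t = f t 0" for t
  have cont0: "continuous_on UNIV f0" unfolding f0_def using H0_cont0[OF hf] .
  have c_eq: "c = (\<lambda>t. (exp (-\<mu>) + exp \<mu> - 2 + f0 t) / \<mu>)" using c_def unfolding f0_def by auto
  have ccont: "continuous_on UNIV c" unfolding c_eq using mu(1) by (intro continuous_intros cont0) auto
  have B_eq: "B = (\<lambda>t. -(exp (-\<mu>t) + exp \<mu>t - 2) + c t * \<mu>t - f0 t)" using B_def unfolding f0_def by auto
  have Bcont: "continuous_on UNIV B" unfolding B_eq by (intro continuous_intros ccont cont0)
  obtain \<delta> where del: "\<delta> > 0" and ae: "AE t in lborel. \<exists>D. (A has_real_derivative D) (at t) \<and> D + B t \<ge> \<delta>"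
    using A_B by blast
  obtain KA where KA: "\<forall>t. \<bar>A t\<bar> \<le> KA" using A_bdd by blast
  obtain LA where LA: "LA-lipschitz_on UNIV A" using A_lip by blast
  have lipR: "\<forall>R. \<exists>L. \<forall>t u v. \<bar>u\<bar> \<le> R \<longrightarrow> \<bar>v\<bar> \<le> R \<longrightarrow> \<bar>f t u - f t v\<bar> \<le> L * \<bar>u - v\<bar>"
    using hf unfolding H0_def by blast
  hence lipf: "\<exists>L\<ge>0. \<forall>t u v. \<bar>u\<bar> \<le> R \<longrightarrow> \<bar>v\<bar> \<le> R \<longrightarrow> \<bar>f t u - f t v\<bar> \<le> L * \<bar>u - v\<bar>" for R
  proof -
    obtain L where L: "\<forall>t u v. \<bar>u\<bar> \<le> R \<longrightarrow> \<bar>v\<bar> \<le> R \<longrightarrow> \<bar>f t u - f t v\<bar> \<le> L * \<bar>u - v\<bar>"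
      using lipR by blast
    have "\<bar>f t u - f t v\<bar> \<le> max L 0 * \<bar>u - v\<bar>" if "\<bar>u\<bar> \<le> R" "\<bar>v\<bar> \<le> R" for t u v
    proof -
      have "L * \<bar>u - v\<bar> \<le> max L 0 * \<bar>u - v\<bar>" by (intro mult_right_mono) auto
      moreover have "\<bar>f t u - f t v\<bar> \<le> L * \<bar>u - v\<bar>" using L that by blast
      ultimately show ?thesis by linarith
    qed
    thus ?thesis by (intro exI[of _ "max L 0"]) auto
  qed
  obtain L where L0: "L \<ge> 0" and Lf: "\<forall>t u v. \<bar>u\<bar> \<le> 2 \<longrightarrow> \<bar>v\<bar> \<le> 2 \<longrightarrow> \<bar>f t u - f t v\<bar> \<le> L * \<bar>u - v\<bar>"
    using lipf[of 2] by blast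
  have fneg: "\<forall>u t. u \<le> 0 \<longrightarrow> f t u = f t 0" using hf unfolding H0_def by blast
  define F where "F t = oint 0 t c" for t
  have Fder: "(F has_real_derivative c t) (at t within S)" for t S
    unfolding F_def by (rule has_field_derivative_at_within[OF oint_deriv[OF ccont]])
  define g where "g \<tau> = \<delta> - B \<tau>" for \<tau>
  have gcont: "continuous_on UNIV g" unfolding g_def by (intro continuous_intros Bcont)
  define a where "a r t = A r + oint r t g" for r t
  have ader: "(a r has_real_derivative g t) (at t)" for r t
  proof -
    have "((\<lambda>t. A r + oint r t g) has_real_derivative 0 + g t) (at t)"
      by (intro DERIV_add DERIV_const oint_deriv[OF gcont])
    thus ?thesis unfolding a_def by simp
  qed
  have a_same: "a r r = A r" for r unfolding a_def by simp
  have a_le: "a r t \<le> A t" if rt: "r \<le> t" for r t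
  proof -
    obtain Mb where Mb: "Mb \<ge> 0" "\<forall>x\<in>{r..t}. \<bar>g x\<bar> \<le> Mb"
      using cont_bound[OF continuous_on_subset[OF gcont]] by blast
    have lipa: "Mb-lipschitz_on {r..t} (a r)" by (rule lip_from_deriv[OF ader Mb(2) Mb(1)])
    have lipA: "LA-lipschitz_on {r..t} A" using lipschitz_on_subset[OF LA] by auto
    have lip: "(LA + Mb)-lipschitz_on {r..t} (\<lambda>x. A x - a r x)" by (intro lipschitz_on_diff lipA lipa)
    have aeg: "AE x in lborel. \<exists>D. ((\<lambda>x. A x - a r x) has_real_derivative D) (at x) \<and> D \<ge> 0"
    proof (rule eventually_mono[OF ae])
      fix x assume "\<exists>D. (A has_real_derivative D) (at x) \<and> D + B x \<ge> \<delta>"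
      then obtain D where D: "(A has_real_derivative D) (at x)" "D + B x \<ge> \<delta>" by blast
      have "((\<lambda>x. A x - a r x) has_real_derivative D - g x) (at x)" by (intro DERIV_diff D(1) ader)
      moreover have "D - g x \<ge> 0" using D(2) unfolding g_def by simp
      ultimately show "\<exists>D. ((\<lambda>x. A x - a r x) has_real_derivative D) (at x) \<and> D \<ge> 0" by blast
    qed
    have "A r - a r r \<le> A t - a r t" by (rule mono_ae[OF rt lip aeg])
    thus ?thesis using a_same by simp
  qed
  define \<psi> where "\<psi> r t j = exp (a r t - \<mu>t * (real_of_int j - F t))" for r t j
  have phi': "\<phi> t j = exp (-\<mu> * (real_of_int j - F t))" for t j using phi_def unfolding F_def by simp
  have phi1': "\<phi>1 t j = exp (A t - \<mu>t * (real_of_int j - F t))" for t j using phi1_def unfolding F_def by simp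
  have psi_le: "\<psi> r t j \<le> \<phi>1 t j" if "r \<le> t" for r t j
    unfolding \<psi>_def phi1' using a_le[OF that] by simp
  have psi_same: "\<psi> r r j = \<phi>1 r j" for r j unfolding \<psi>_def phi1' a_same by simp
  have phi_pos: "\<phi> t j > 0" for t j unfolding phi' by simp
  have psi_pos: "\<psi> r t j > 0" for r t j unfolding \<psi>_def by simp
  have phider: "((\<lambda>\<tau>. \<phi> \<tau> j) has_real_derivative \<mu> * c t * \<phi> t j) (at t within S)" for t j S
    unfolding phi' by (auto intro!: derivative_eq_intros Fder simp: algebra_simps)
  have psider: "((\<lambda>\<tau>. \<psi> r \<tau> j) has_real_derivative (g t + \<mu>t * c t) * \<psi> r t j) (at t within S)" for r t j S
    unfolding \<psi>_def by (auto intro!: derivative_eq_intros Fder has_field_derivative_at_within[OF ader] simp: algebra_simps)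
  have phi_sh: "\<phi> t (j+1) = exp (-\<mu>) * \<phi> t j" "\<phi> t (j-1) = exp \<mu> * \<phi> t j" for t j
    unfolding phi' by (simp_all add: exp_add[symmetric] algebra_simps)
  have psi_sh: "\<psi> r t (j+1) = exp (-\<mu>t) * \<psi> r t j" "\<psi> r t (j-1) = exp \<mu>t * \<psi> r t j" for r t j
    unfolding \<psi>_def by (simp_all add: exp_add[symmetric] algebra_simps)
  have cmu: "\<mu> * c t = exp (-\<mu>) + exp \<mu> - 2 + f0 t" for t unfolding c_eq using mu(1) by simp
  have Lphi: "\<mu> * c t * \<phi> t j = \<phi> t (j+1) + \<phi> t (j-1) - 2 * \<phi> t j + f0 t * \<phi> t j" for t j
    unfolding phi_sh cmu by (simp add: algebra_simps)
  have Lpsi: "(g t + \<mu>t * c t) * \<psi> r t j = \<psi> r t (j+1) + \<psi> r t (j-1) - 2 * \<psi> r t j + f0 t * \<psi> r t j + \<delta> * \<psi> r t j" for r t j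
  proof -
    have ge: "g t + \<mu>t * c t = exp (-\<mu>t) + exp \<mu>t - 2 + f0 t + \<delta>" unfolding g_def B_eq by (simp add: algebra_simps)
    show ?thesis unfolding psi_sh ge by (simp add: algebra_simps)
  qed
  define D1 where "D1 = max (2 * exp (KA + 1)) (4 * L * exp (KA + 1) / \<delta>)"
  show ?thesis
  proof (rule exI[of _ D1], intro allI impI, rule conjI)
    fix d1 d t0 :: real and u0 :: "int \<Rightarrow> real" and u :: "real \<Rightarrow> int \<Rightarrow> real"
    assume d1: "d1 \<ge> D1" and d: "0 < d \<and> d \<le> 2" and sol: "linf_plus u0 \<and> lattice_solution f t0 u0 u"
    have d1a: "d1 \<ge> 2 * exp (KA + 1)" "d1 \<ge> 4 * L * exp (KA + 1) / \<delta>" using d1 unfolding D1_def by auto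
    have "exp (KA + 1) > 0" by simp
    hence d1p: "d1 > 0" using d1a(1) by linarith
    have u0: "\<forall>j. 0 \<le> u0 j" using sol unfolding linf_plus_def by blast
    have ls: "lattice_solution f t0 u0 u" using sol by blast
    note ls' = ls[unfolded lattice_solution_def]
    have ut0: "u t0 = u0" using ls' by (rule conjunct1)
    have ubd: "\<forall>T. \<exists>K. \<forall>t\<in>{t0..T}. \<forall>j. \<bar>u t j\<bar> \<le> K"
      using conjunct1[OF conjunct2[OF ls']] .
    have uder0: "\<forall>t\<ge>t0. \<forall>j. ((\<lambda>s. u s j) has_real_derivative
         (u t (j+1) - u t j) + (u t (j-1) - u t j) + u t j * f t (u t j)) (at t within {t0..})"
      using conjunct2[OF conjunct2[OF ls']] .
    define U where "U t j = (u t (j+1) - u t j) + (u t (j-1) - u t j) + u t j * f t (u t j)" for t j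
    have uder: "((\<lambda>s. u s j) has_real_derivative U t j) (at t within {s..})" if "t0 \<le> s" "s \<le> t" for s t j
      using has_field_derivative_subset[OF uder0[rule_format, of t j]] that unfolding U_def by auto
    have fbd: "\<exists>K\<ge>0. \<forall>t\<in>{t0..T}. \<bar>f0 t\<bar> \<le> K" for T
      using cont_bound[OF continuous_on_subset[OF cont0]] by blast
    have unn: "\<forall>t\<ge>t0. \<forall>j. 0 \<le> u t j"
    proof (intro allI impI)
      fix t j assume t: "t0 \<le> t"
      obtain Ku where Ku: "\<forall>\<tau>\<in>{t0..t}. \<forall>j. \<bar>u \<tau> j\<bar> \<le> Ku" using ubd by blast
      obtain Kf where Kf: "Kf \<ge> 0" "\<forall>\<tau>\<in>{t0..t}. \<bar>f0 \<tau>\<bar> \<le> Kf" using fbd by blast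
      have "\<forall>\<tau>\<in>{t0..t}. \<forall>j. - u \<tau> j \<le> 0"
      proof (rule cmp[of t0 t Kf "\<lambda>\<tau> j. - u \<tau> j" Ku "\<lambda>\<tau> j. - U \<tau> j"])
        show "t0 \<le> t" "0 \<le> Kf" by (fact t, fact Kf(1))
        show "\<forall>j. - u t0 j \<le> 0" using u0 ut0 by simp
        show "\<forall>\<tau>\<in>{t0..t}. \<forall>j. - u \<tau> j \<le> Ku"
        proof (intro ballI allI)
          fix \<tau> j assume "\<tau> \<in> {t0..t}"
          hence "\<bar>u \<tau> j\<bar> \<le> Ku" using Ku by blast
          thus "- u \<tau> j \<le> Ku" by linarith
        qed
        show "\<forall>\<tau>\<in>{t0..t}. \<forall>j. ((\<lambda>\<tau>. - u \<tau> j) has_real_derivative - U \<tau> j) (at \<tau> within {t0..})"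
          using uder by (auto intro!: DERIV_minus)
        show "\<forall>\<tau>\<in>{t0..t}. \<forall>j. - u \<tau> j > 0 \<longrightarrow> - U \<tau> j \<le> - u \<tau> (j+1) + - u \<tau> (j-1) - 2 * - u \<tau> j + Kf * - u \<tau> j"
        proof (intro ballI allI impI)
          fix \<tau> j assume \<tau>: "\<tau> \<in> {t0..t}" and neg: "- u \<tau> j > 0"
          have "f \<tau> (u \<tau> j) = f0 \<tau>" using fneg[rule_format, of "u \<tau> j" \<tau>] neg unfolding f0_def by simp
          moreover have "f0 \<tau> \<le> Kf" using Kf(2) \<tau> abs_le_D1 by blast
          hence "- u \<tau> j * f0 \<tau> \<le> - u \<tau> j * Kf" using neg by (intro mult_left_mono) auto
          ultimately show "- U \<tau> j \<le> - u \<tau> (j+1) + - u \<tau> (j-1) - 2 * - u \<tau> j + Kf * - u \<tau> j"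
            unfolding U_def by (simp add: algebra_simps)
        qed
      qed
      thus "0 \<le> u t j" using t by auto
    qed
    show "(\<forall>j. u0 j \<le> d * \<phi> t0 j + d1 * \<phi>1 t0 j) \<longrightarrow> (\<forall>t\<ge>t0. \<forall>j. u t j \<le> d * \<phi> t j + d1 * \<phi>1 t j)"
    proof (intro impI allI)
      fix T j assume hyp: "\<forall>j. u0 j \<le> d * \<phi> t0 j + d1 * \<phi>1 t0 j" and T: "t0 \<le> T"
      obtain Ku where Ku: "\<forall>\<tau>\<in>{t0..T}. \<forall>j. \<bar>u \<tau> j\<bar> \<le> Ku" using ubd by blast
      obtain Kf where Kf: "Kf \<ge> 0" "\<forall>\<tau>\<in>{t0..T}. \<bar>f0 \<tau>\<bar> \<le> Kf" using fbd by blast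
      define v where "v \<tau> j = d * \<phi> \<tau> j + d1 * \<psi> t0 \<tau> j" for \<tau> j
      define V' where "V' \<tau> j = d * (\<mu> * c \<tau> * \<phi> \<tau> j) + d1 * ((g \<tau> + \<mu>t * c \<tau>) * \<psi> t0 \<tau> j)" for \<tau> j
      have vpos: "v \<tau> j > 0" for \<tau> j unfolding v_def using d d1p phi_pos psi_pos by (simp add: add_pos_pos)
      have "\<forall>\<tau>\<in>{t0..T}. \<forall>j. u \<tau> j - v \<tau> j \<le> 0"
      proof (rule cmp[of t0 T Kf "\<lambda>\<tau> j. u \<tau> j - v \<tau> j" Ku "\<lambda>\<tau> j. U \<tau> j - V' \<tau> j"])
        show "t0 \<le> T" "0 \<le> Kf" by (fact T, fact Kf(1))
        show "\<forall>j. u t0 j - v t0 j \<le> 0" using hyp ut0 unfolding v_def psi_same by simp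
        show "\<forall>\<tau>\<in>{t0..T}. \<forall>j. u \<tau> j - v \<tau> j \<le> Ku"
        proof (intro ballI allI)
          fix \<tau> j assume "\<tau> \<in> {t0..T}"
          hence "\<bar>u \<tau> j\<bar> \<le> Ku" using Ku by blast
          thus "u \<tau> j - v \<tau> j \<le> Ku" using vpos[of \<tau> j] by linarith
        qed
        show "\<forall>\<tau>\<in>{t0..T}. \<forall>j. ((\<lambda>\<tau>. u \<tau> j - v \<tau> j) has_real_derivative U \<tau> j - V' \<tau> j) (at \<tau> within {t0..})"
        proof (intro ballI allI)
          fix \<tau> j assume \<tau>: "\<tau> \<in> {t0..T}"
          have "((\<lambda>\<tau>. v \<tau> j) has_real_derivative V' \<tau> j) (at \<tau> within {t0..})"
            unfolding v_def V'_def by (intro DERIV_add DERIV_cmult phider psider)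
          thus "((\<lambda>\<tau>. u \<tau> j - v \<tau> j) has_real_derivative U \<tau> j - V' \<tau> j) (at \<tau> within {t0..})"
            using uder[of t0 \<tau> j] \<tau> by (intro DERIV_diff) auto
        qed
        show "\<forall>\<tau>\<in>{t0..T}. \<forall>j. u \<tau> j - v \<tau> j > 0 \<longrightarrow> U \<tau> j - V' \<tau> j \<le> (u \<tau> (j+1) - v \<tau> (j+1)) + (u \<tau> (j-1) - v \<tau> (j-1)) - 2 * (u \<tau> j - v \<tau> j) + Kf * (u \<tau> j - v \<tau> j)"
        proof (intro ballI allI impI)
          fix \<tau> j assume \<tau>: "\<tau> \<in> {t0..T}" and pos: "u \<tau> j - v \<tau> j > 0"
          have uge: "u \<tau> j \<ge> 0" using unn \<tau> by auto
          have "f \<tau> (u \<tau> j) \<le> f0 \<tau>" unfolding f0_def by (rule H0_decr[OF hf uge])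
          hence ff: "u \<tau> j * f \<tau> (u \<tau> j) \<le> u \<tau> j * f0 \<tau>" using uge by (rule mult_left_mono)
          have "f0 \<tau> \<le> Kf" using Kf(2) \<tau> abs_le_D1 by blast
          hence f0K: "f0 \<tau> * (u \<tau> j - v \<tau> j) \<le> Kf * (u \<tau> j - v \<tau> j)" using pos by (intro mult_right_mono) auto
          have dp: "d1 * \<delta> * \<psi> t0 \<tau> j \<ge> 0" using d1p del psi_pos[of t0 \<tau> j] by simp
          have eq: "U \<tau> j - V' \<tau> j = (u \<tau> (j+1) - v \<tau> (j+1)) + (u \<tau> (j-1) - v \<tau> (j-1)) - 2 * (u \<tau> j - v \<tau> j)
              + f0 \<tau> * (u \<tau> j - v \<tau> j) + (u \<tau> j * f \<tau> (u \<tau> j) - u \<tau> j * f0 \<tau>) - d1 * \<delta> * \<psi> t0 \<tau> j"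
            unfolding U_def V'_def v_def Lphi Lpsi by (simp add: algebra_simps)
          show "U \<tau> j - V' \<tau> j \<le> (u \<tau> (j+1) - v \<tau> (j+1)) + (u \<tau> (j-1) - v \<tau> (j-1)) - 2 * (u \<tau> j - v \<tau> j) + Kf * (u \<tau> j - v \<tau> j)"
            using eq ff f0K dp by linarith
        qed
      qed
      hence "u T j \<le> v T j" using T by auto
      also have "v T j \<le> d * \<phi> T j + d1 * \<phi>1 T j" unfolding v_def using psi_le[OF T, of j] d1p by simp
      finally show "u T j \<le> d * \<phi> T j + d1 * \<phi>1 T j" .
    qed
    show "(\<forall>j. d * \<phi> t0 j - d1 * \<phi>1 t0 j \<le> u0 j) \<longrightarrow> (\<forall>t\<ge>t0. \<forall>j. d * \<phi> t j - d1 * \<phi>1 t j \<le> u t j)"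
    proof (intro impI allI)
      fix T j assume hyp: "\<forall>j. d * \<phi> t0 j - d1 * \<phi>1 t0 j \<le> u0 j" and T: "t0 \<le> T"
      obtain Ku where Ku: "\<forall>\<tau>\<in>{t0..T}. \<forall>j. \<bar>u \<tau> j\<bar> \<le> Ku" using ubd by blast
      have Ku0: "Ku \<ge> 0" using Ku T by force
      obtain Kf where Kf: "Kf \<ge> 0" "\<forall>\<tau>\<in>{t0..T}. \<bar>f0 \<tau>\<bar> \<le> Kf" using fbd by blast
      obtain Mb where Mb: "Mb \<ge> 0" "\<forall>x\<in>{t0..T}. \<bar>g x\<bar> \<le> Mb"
        using cont_bound[OF continuous_on_subset[OF gcont]] by blast
      obtain L' where L': "L' \<ge> 0" "\<forall>t u v. \<bar>u\<bar> \<le> max 2 Ku \<longrightarrow> \<bar>v\<bar> \<le> max 2 Ku \<longrightarrow> \<bar>f t u - f t v\<bar> \<le> L' * \<bar>u - v\<bar>"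
        using lipf by blast
      define h where "h = 1 / (Mb + 1)"
      have hpos: "h > 0" unfolding h_def using Mb by simp
      define P where "P \<tau> \<longleftrightarrow> (\<forall>j. d * \<phi> \<tau> j - d1 * \<phi>1 \<tau> j \<le> u \<tau> j)" for \<tau>
      have step: "P \<tau>" if s: "s \<in> {t0..T}" "P s" and \<tau>: "\<tau> \<in> {s..T}" "\<tau> - s \<le> h" for s \<tau>
      proof -
        define w where "w \<sigma> j = d * \<phi> \<sigma> j - d1 * \<psi> s \<sigma> j" for \<sigma> j
        define W' where "W' \<sigma> j = d * (\<mu> * c \<sigma> * \<phi> \<sigma> j) - d1 * ((g \<sigma> + \<mu>t * c \<sigma>) * \<psi> s \<sigma> j)" for \<sigma> j
        define K where "K = Kf + 2 * L + Ku * L'"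
        have K0: "K \<ge> 0" unfolding K_def using Kf(1) L0 Ku0 L'(1) by simp
        have aa: "a s \<sigma> \<ge> -KA - 1" if \<sigma>: "\<sigma> \<in> {s..\<tau>}" for \<sigma>
        proof -
          have "\<forall>x\<in>{s..\<sigma>}. g x \<ge> - Mb"
          proof
            fix x assume "x \<in> {s..\<sigma>}"
            hence "x \<in> {t0..T}" using s \<sigma> \<tau> by auto
            hence "\<bar>g x\<bar> \<le> Mb" using Mb(2) by blast
            thus "g x \<ge> - Mb" by linarith
          qed
          hence "oint s \<sigma> g \<ge> - Mb * (\<sigma> - s)" using oint_lower[OF gcont] \<sigma> by auto
          moreover have "Mb * (\<sigma> - s) \<le> Mb * h" using \<sigma> \<tau> Mb(1) by (intro mult_left_mono) auto
          moreover have "Mb * h \<le> 1" unfolding h_def using Mb(1) by (simp add: field_simps)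
          moreover have "A s \<ge> - KA" using KA abs_le_D2 by (metis minus_le_iff)
          ultimately show ?thesis unfolding a_def by linarith
        qed
        have est: "w \<sigma> j \<le> 2 \<and> L * (w \<sigma> j)^2 \<le> d1 * \<delta> * \<psi> s \<sigma> j" if \<sigma>: "\<sigma> \<in> {s..\<tau>}" and wp: "w \<sigma> j > 0" for \<sigma> j
        proof -
          have dd: "0 < d" "d \<le> 2" using d by auto
          note ke = key_est[OF mu(1) mut(1) mut(2) dd del L0 aa[OF \<sigma>] d1a(1) d1a(2), of "real_of_int j - F \<sigma>"]
          have "d * exp (- \<mu> * (real_of_int j - F \<sigma>)) - d1 * exp (a s \<sigma> - \<mu>t * (real_of_int j - F \<sigma>)) > 0"
            using wp unfolding w_def phi' \<psi>_def .
          from ke(2)[OF this] ke(3)[OF this] show ?thesis unfolding w_def phi' \<psi>_def by simp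
        qed
        have "\<forall>\<sigma>\<in>{s..\<tau>}. \<forall>j. w \<sigma> j - u \<sigma> j \<le> 0"
        proof (rule cmp[of s \<tau> K "\<lambda>\<sigma> j. w \<sigma> j - u \<sigma> j" 2 "\<lambda>\<sigma> j. W' \<sigma> j - U \<sigma> j"])
          show "s \<le> \<tau>" using \<tau> by simp
          show "0 \<le> K" by (rule K0)
          show "\<forall>j. w s j - u s j \<le> 0" using s(2) unfolding P_def w_def psi_same by simp
          show "\<forall>\<sigma>\<in>{s..\<tau>}. \<forall>j. w \<sigma> j - u \<sigma> j \<le> 2"
          proof (intro ballI allI)
            fix \<sigma> j assume \<sigma>: "\<sigma> \<in> {s..\<tau>}"
            have "u \<sigma> j \<ge> 0" using unn \<sigma> s by auto
            moreover have "w \<sigma> j \<le> 2" using est[OF \<sigma>, of j] by (cases "w \<sigma> j > 0") auto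
            ultimately show "w \<sigma> j - u \<sigma> j \<le> 2" by linarith
          qed
          show "\<forall>\<sigma>\<in>{s..\<tau>}. \<forall>j. ((\<lambda>\<sigma>. w \<sigma> j - u \<sigma> j) has_real_derivative W' \<sigma> j - U \<sigma> j) (at \<sigma> within {s..})"
          proof (intro ballI allI)
            fix \<sigma> j assume \<sigma>: "\<sigma> \<in> {s..\<tau>}"
            have "((\<lambda>\<sigma>. w \<sigma> j) has_real_derivative W' \<sigma> j) (at \<sigma> within {s..})"
              unfolding w_def W'_def by (intro DERIV_diff DERIV_cmult phider psider)
            thus "((\<lambda>\<sigma>. w \<sigma> j - u \<sigma> j) has_real_derivative W' \<sigma> j - U \<sigma> j) (at \<sigma> within {s..})"
              using uder[of s \<sigma> j] \<sigma> s by (intro DERIV_diff) auto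
          qed
          show "\<forall>\<sigma>\<in>{s..\<tau>}. \<forall>j. w \<sigma> j - u \<sigma> j > 0 \<longrightarrow> W' \<sigma> j - U \<sigma> j \<le> (w \<sigma> (j+1) - u \<sigma> (j+1)) + (w \<sigma> (j-1) - u \<sigma> (j-1)) - 2 * (w \<sigma> j - u \<sigma> j) + K * (w \<sigma> j - u \<sigma> j)"
          proof (intro ballI allI impI)
            fix \<sigma> j assume \<sigma>: "\<sigma> \<in> {s..\<tau>}" and pos: "w \<sigma> j - u \<sigma> j > 0"
            have \<sigma>T: "\<sigma> \<in> {t0..T}" using \<sigma> s \<tau> by auto
            have uge: "u \<sigma> j \<ge> 0" using unn \<sigma>T by auto
            have uK: "u \<sigma> j \<le> Ku" using Ku \<sigma>T abs_le_D1 by blast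
            have wp: "w \<sigma> j > 0" using pos uge by linarith
            have w2: "w \<sigma> j \<le> 2" and wL: "L * (w \<sigma> j)^2 \<le> d1 * \<delta> * \<psi> s \<sigma> j" using est[OF \<sigma> wp] by auto
            have "\<bar>f \<sigma> (w \<sigma> j) - f \<sigma> 0\<bar> \<le> L * \<bar>w \<sigma> j - 0\<bar>" using Lf[rule_format, of "w \<sigma> j" 0 \<sigma>] w2 wp by simp
            hence fw: "\<bar>f \<sigma> (w \<sigma> j) - f0 \<sigma>\<bar> \<le> L * w \<sigma> j" using wp unfolding f0_def by simp
            have A1: "w \<sigma> j * (f0 \<sigma> - f \<sigma> (w \<sigma> j)) \<le> w \<sigma> j * (L * w \<sigma> j)"
              using fw wp by (intro mult_left_mono) auto
            have A1': "w \<sigma> j * (L * w \<sigma> j) = L * (w \<sigma> j)^2" by (simp add: power2_eq_square)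
            have "f0 \<sigma> \<le> Kf" using Kf(2) \<sigma>T abs_le_D1 by blast
            moreover have "L * w \<sigma> j \<le> L * 2" using w2 L0 by (intro mult_left_mono)
            ultimately have "f \<sigma> (w \<sigma> j) \<le> Kf + 2 * L" using fw by linarith
            hence A3: "(w \<sigma> j - u \<sigma> j) * f \<sigma> (w \<sigma> j) \<le> (w \<sigma> j - u \<sigma> j) * (Kf + 2 * L)"
              using pos by (intro mult_left_mono) auto
            have "\<bar>f \<sigma> (w \<sigma> j) - f \<sigma> (u \<sigma> j)\<bar> \<le> L' * \<bar>w \<sigma> j - u \<sigma> j\<bar>"
              using L'(2)[rule_format, of "w \<sigma> j" "u \<sigma> j" \<sigma>] w2 wp uge uK by simp
            hence "f \<sigma> (w \<sigma> j) - f \<sigma> (u \<sigma> j) \<le> L' * (w \<sigma> j - u \<sigma> j)" using pos by simp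
            hence "u \<sigma> j * (f \<sigma> (w \<sigma> j) - f \<sigma> (u \<sigma> j)) \<le> u \<sigma> j * (L' * (w \<sigma> j - u \<sigma> j))"
              using uge by (rule mult_left_mono)
            also have "\<dots> \<le> Ku * (L' * (w \<sigma> j - u \<sigma> j))" using uK pos L'(1) by (intro mult_right_mono) auto
            finally have A4: "u \<sigma> j * (f \<sigma> (w \<sigma> j) - f \<sigma> (u \<sigma> j)) \<le> Ku * (L' * (w \<sigma> j - u \<sigma> j))" .
            have Kd: "K * (w \<sigma> j - u \<sigma> j) = (w \<sigma> j - u \<sigma> j) * (Kf + 2 * L) + Ku * (L' * (w \<sigma> j - u \<sigma> j))"
              unfolding K_def by (simp add: algebra_simps)
            have eq: "W' \<sigma> j - U \<sigma> j = (w \<sigma> (j+1) - u \<sigma> (j+1)) + (w \<sigma> (j-1) - u \<sigma> (j-1)) - 2 * (w \<sigma> j - u \<sigma> j)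
                + (w \<sigma> j * (f0 \<sigma> - f \<sigma> (w \<sigma> j)) - d1 * \<delta> * \<psi> s \<sigma> j)
                + ((w \<sigma> j - u \<sigma> j) * f \<sigma> (w \<sigma> j) + u \<sigma> j * (f \<sigma> (w \<sigma> j) - f \<sigma> (u \<sigma> j)))"
              unfolding U_def W'_def w_def Lphi Lpsi by (simp add: algebra_simps)
            show "W' \<sigma> j - U \<sigma> j \<le> (w \<sigma> (j+1) - u \<sigma> (j+1)) + (w \<sigma> (j-1) - u \<sigma> (j-1)) - 2 * (w \<sigma> j - u \<sigma> j) + K * (w \<sigma> j - u \<sigma> j)"
              using eq A1 A1' wL A3 A4 Kd by linarith
          qed
        qed
        hence "w \<tau> j - u \<tau> j \<le> 0" for j using \<tau> by auto
        moreover have "d * \<phi> \<tau> j - d1 * \<phi>1 \<tau> j \<le> w \<tau> j" for j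
          unfolding w_def using psi_le[of s \<tau> j] \<tau> d1p by simp
        ultimately show "P \<tau>" unfolding P_def by (meson order_trans diff_le_0_iff_le)
      qed
      have ind: "\<forall>\<sigma>\<in>{t0..T}. \<sigma> \<le> t0 + real n * h \<longrightarrow> P \<sigma>" for n :: nat
      proof (induction n)
        case 0
        show ?case
        proof (intro ballI impI)
          fix \<sigma> assume "\<sigma> \<in> {t0..T}" "\<sigma> \<le> t0 + real 0 * h"
          hence "\<sigma> = t0" by simp
          thus "P \<sigma>" using hyp ut0 unfolding P_def by simp
        qed
      next
        case (Suc n)
        show ?case
        proof (intro ballI impI)
          fix \<sigma> assume \<sigma>: "\<sigma> \<in> {t0..T}" "\<sigma> \<le> t0 + real (Suc n) * h"
          show "P \<sigma>"
          proof (cases "\<sigma> \<le> t0 + real n * h")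
            case True thus ?thesis using Suc.IH \<sigma>(1) by blast
          next
            case False
            define s where "s = t0 + real n * h"
            have s: "s \<in> {t0..T}" using False \<sigma> hpos unfolding s_def by auto
            hence "P s" using Suc.IH unfolding s_def by blast
            moreover have "\<sigma> \<in> {s..T}" "\<sigma> - s \<le> h" using False \<sigma> unfolding s_def by (auto simp: algebra_simps)
            ultimately show ?thesis using step[OF s] by blast
          qed
        qed
      qed
      define n where "n = nat \<lceil>(T - t0) / h\<rceil>"
      have "(T - t0) / h \<le> real n" unfolding n_def by linarith
      hence "T \<le> t0 + real n * h" using hpos by (simp add: field_simps)
      hence "P T" using ind[of n] T by auto
      thus "d * \<phi> T j - d1 * \<phi>1 T j \<le> u T j" unfolding P_def by blast
    qed
  qed
qed


end
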